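(* For every integer $k\geq 2$ and every graph $G$ containing at most one cycle, $\nu_{k}(G) \geq \left \lfloor \frac{\nu_{k-1}(G) + \nu_{k+1}(G)}{2} \right \rfloor$.
   Context: Graphs are finite, without loops, possibly with multiple edges. For $k\geq 1$, $\nu_k(G)$ is the maximum number of edges of a $k$-edge-colorable subgraph of $G$. *)

theory Defs
  imports Main
begin

text \<open>A finite loopless multigraph: finite vertex set V, finite edge set E (edge
identifiers, so parallel edges are allowed), and each edge e has a set ends e of
exactly two distinct endpoints in V.\<close>

definition multigraph :: "'v set \<Rightarrow> 'e set \<Rightarrow> ('e \<Rightarrow> 'v set) \<Rightarrow> bool" where
  "multigraph V E ends \<longleftrightarrow> finite V \<and> finite E \<and>
     (\<forall>e\<in>E. ends e \<subseteq> V \<and> card (ends e) = 2)"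

definition edge_colorable :: "('e \<Rightarrow> 'v set) \<Rightarrow> nat \<Rightarrow> 'e set \<Rightarrow> bool" where
  "edge_colorable ends k F \<longleftrightarrow> (\<exists>c :: 'e \<Rightarrow> nat.
     (\<forall>e\<in>F. c e < k) \<and>
     (\<forall>e\<in>F. \<forall>e'\<in>F. e \<noteq> e' \<and> ends e \<inter> ends e' \<noteq> {} \<longrightarrow> c e \<noteq> c e'))"

definition nu :: "'e set \<Rightarrow> ('e \<Rightarrow> 'v set) \<Rightarrow> nat \<Rightarrow> nat" where
  "nu E ends k = Max {card F | F. F \<subseteq> E \<and> edge_colorable ends k F}"

text \<open>A cycle (as an edge set): nonempty, connected, every vertex has degree 0 or 2
in it. Two parallel edges form a cycle of length 2.\<close>

definition edge_connected_set :: "('e \<Rightarrow> 'v set) \<Rightarrow> 'e set \<Rightarrow> bool" where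
  "edge_connected_set ends C \<longleftrightarrow>
     (\<forall>D. D \<subseteq> C \<and> D \<noteq> {} \<and> D \<noteq> C \<longrightarrow>
        (\<exists>e\<in>D. \<exists>e'\<in>C - D. ends e \<inter> ends e' \<noteq> {}))"

definition is_cycle :: "'e set \<Rightarrow> ('e \<Rightarrow> 'v set) \<Rightarrow> 'e set \<Rightarrow> bool" where
  "is_cycle E ends C \<longleftrightarrow> C \<subseteq> E \<and> C \<noteq> {} \<and> edge_connected_set ends C \<and>
     (\<forall>v. card {e\<in>C. v \<in> ends e} = 0 \<or> card {e\<in>C. v \<in> ends e} = 2)"

definition at_most_one_cycle :: "'e set \<Rightarrow> ('e \<Rightarrow> 'v set) \<Rightarrow> bool" where
  "at_most_one_cycle E ends \<longleftrightarrow>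
     (\<forall>C1 C2. is_cycle E ends C1 \<and> is_cycle E ends C2 \<longrightarrow> C1 = C2)"

end

theory Submission imports Defs begin

locale mg =
  fixes V :: "'v set" and E :: "'e set" and ends :: "'e \<Rightarrow> 'v set"
  assumes mg: "multigraph V E ends" and one: "at_most_one_cycle E ends"
begin

definition deg :: "'e set \<Rightarrow> 'v \<Rightarrow> nat" where
  "deg X v = card {e\<in>X. v \<in> ends e}"
definition Vs :: "'e set \<Rightarrow> 'v set" where "Vs X = \<Union>(ends ` X)"
definition leafless :: "'e set \<Rightarrow> bool" where "leafless X \<longleftrightarrow> (\<forall>v. deg X v \<noteq> 1)"
definition acyc :: "'e set \<Rightarrow> bool" where "acyc X \<longleftrightarrow> (\<forall>C. is_cycle E ends C \<longrightarrow> \<not> C \<subseteq> X)"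

lemma finE: "finite E" using mg by (simp add: multigraph_def)
lemma ends2: "e \<in> E \<Longrightarrow> card (ends e) = 2" using mg by (simp add: multigraph_def)
lemma fin_ends: "e \<in> E \<Longrightarrow> finite (ends e)" using ends2 by (metis card.infinite zero_neq_numeral)
lemma finX: "X \<subseteq> E \<Longrightarrow> finite X" using finE finite_subset by blast
lemma fin_Vs: "X \<subseteq> E \<Longrightarrow> finite (Vs X)"
  unfolding Vs_def using finX fin_ends by blast

lemma handshake:
  assumes "X \<subseteq> E" shows "(\<Sum>v\<in>Vs X. deg X v) = 2 * card X"
proof -
  have fX: "finite X" using assms finX by blast
  have fV: "finite (Vs X)" using assms fin_Vs by blast
  have "(\<Sum>v\<in>Vs X. deg X v) = (\<Sum>v\<in>Vs X. \<Sum>e\<in>X. if v \<in> ends e then 1 else 0)"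
    unfolding deg_def using fX by (simp add: sum.If_cases Int_def)
  also have "\<dots> = (\<Sum>e\<in>X. \<Sum>v\<in>Vs X. if v \<in> ends e then 1 else 0)"
    by (rule sum.swap)
  also have "\<dots> = (\<Sum>e\<in>X. card (ends e))"
  proof (rule sum.cong[OF refl])
    fix e assume "e \<in> X"
    then have "Vs X \<inter> {v. v \<in> ends e} = ends e" unfolding Vs_def by auto
    then show "(\<Sum>v\<in>Vs X. if v \<in> ends e then 1 else 0) = card (ends e)"
      using fV by (simp add: sum.If_cases)
  qed
  also have "\<dots> = (\<Sum>e\<in>X. 2)" using assms ends2 by (intro sum.cong) auto
  finally show ?thesis by simp
qed

lemma deg_le: "X \<subseteq> E \<Longrightarrow> Y \<subseteq> X \<Longrightarrow> deg Y v \<le> deg X v"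
  unfolding deg_def by (rule card_mono) (auto intro: finX)

lemma deg_pos: assumes "X \<subseteq> E" "v \<in> Vs X" shows "deg X v \<ge> 1"
proof -
  obtain e where "e \<in> X" "v \<in> ends e" using assms(2) unfolding Vs_def by blast
  then have "{e'\<in>X. v \<in> ends e'} \<noteq> {}" by blast
  moreover have "finite {e'\<in>X. v \<in> ends e'}" using finX[OF assms(1)] by simp
  ultimately show ?thesis unfolding deg_def by (simp add: Suc_leI card_gt_0_iff)
qed

lemma deg_out: "v \<notin> Vs X \<Longrightarrow> deg X v = 0"
proof -
  assume "v \<notin> Vs X"
  then have "{e\<in>X. v \<in> ends e} = {}" unfolding Vs_def by blast
  then show ?thesis unfolding deg_def by (metis card.empty)
qed

lemma deg1E:
  assumes "X \<subseteq> E" "deg X w = 1"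
  obtains e where "e \<in> X" "w \<in> ends e" "\<And>e'. e' \<in> X \<Longrightarrow> w \<in> ends e' \<Longrightarrow> e' = e"
proof -
  from assms(2) obtain e where "{e'\<in>X. w \<in> ends e'} = {e}" unfolding deg_def by (auto simp: card_1_singleton_iff)
  then show ?thesis using that by blast
qed

lemma forest_count:
  assumes "D \<subseteq> E" "D \<noteq> {}" "\<forall>Z. Z \<subseteq> D \<longrightarrow> Z \<noteq> {} \<longrightarrow> \<not> leafless Z"
  shows "card D < card (Vs D)"
  using assms
proof (induction "card D" arbitrary: D rule: less_induct)
  case less
  then have "\<not> leafless D" using less.prems(3) less.prems(2) by simp
  then obtain w where w: "deg D w = 1" unfolding leafless_def by blast
  then obtain e where e: "e \<in> D" "w \<in> ends e" "\<And>e'. e' \<in> D \<Longrightarrow> w \<in> ends e' \<Longrightarrow> e' = e"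
    using deg1E less.prems(1) by blast
  have fD: "finite D" using less.prems(1) finX by blast
  have fV: "finite (Vs D)" using less.prems(1) fin_Vs by blast
  show ?case
  proof (cases "D - {e} = {}")
    case True
    then have "D = {e}" using e(1) by blast
    then have "Vs D = ends e" unfolding Vs_def by simp
    moreover have "card (ends e) = 2" using ends2 e(1) less.prems(1) by blast
    ultimately show ?thesis using \<open>D = {e}\<close> by simp
  next
    case False
    have "card (D - {e}) < card (Vs (D - {e}))"
    proof (rule less.hyps)
      show "card (D - {e}) < card D" using card_Diff1_less[OF fD e(1)] .
      show "D - {e} \<subseteq> E" using less.prems(1) by blast
      show "D - {e} \<noteq> {}" by fact
      show "\<forall>Z. Z \<subseteq> D - {e} \<longrightarrow> Z \<noteq> {} \<longrightarrow> \<not> leafless Z" using less.prems(3) by blast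
    qed
    moreover have "Vs (D - {e}) \<subseteq> Vs D - {w}"
    proof
      fix x assume "x \<in> Vs (D - {e})"
      then obtain e' where e': "e' \<in> D" "e' \<noteq> e" "x \<in> ends e'" unfolding Vs_def by blast
      then have "x \<noteq> w" using e(3) by blast
      then show "x \<in> Vs D - {w}" using e' unfolding Vs_def by blast
    qed
    then have "card (Vs (D - {e})) \<le> card (Vs D - {w})" using fV by (intro card_mono) auto
    moreover have "w \<in> Vs D" unfolding Vs_def using e by auto
    moreover have "card (Vs D - {w}) = card (Vs D) - 1" using fV \<open>w \<in> Vs D\<close> by simp
    moreover have "card (D - {e}) = card D - 1" using fD e(1) by simp
    moreover have "card D \<ge> 1" using fD e(1) by (metis One_nat_def Suc_leI card_gt_0_iff empty_iff)
    ultimately show ?thesis by linarith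
  qed
qed

lemma deg2:
  assumes "X \<subseteq> E" "leafless X" "card X \<le> card (Vs X)"
  shows "deg X v = 0 \<or> deg X v = 2"
proof (rule ccontr)
  assume a: "\<not> (deg X v = 0 \<or> deg X v = 2)"
  then have vV: "v \<in> Vs X" using deg_out by blast
  have ge2: "\<forall>u\<in>Vs X. 2 \<le> deg X u"
  proof
    fix u assume "u \<in> Vs X"
    then have "deg X u \<ge> 1" "deg X u \<noteq> 1" using deg_pos[OF assms(1)] assms(2) unfolding leafless_def by auto
    then show "2 \<le> deg X u" by linarith
  qed
  have "2 < deg X v" using ge2 vV a by force
  then have "(\<Sum>u\<in>Vs X. 2) < (\<Sum>u\<in>Vs X. deg X u)"
    using fin_Vs[OF assms(1)] ge2 vV by (intro sum_strict_mono_ex1) auto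
  then show False using handshake[OF assms(1)] assms(3) by simp
qed

lemma uniq: "is_cycle E ends C1 \<Longrightarrow> is_cycle E ends C2 \<Longrightarrow> C1 = C2"
  using one unfolding at_most_one_cycle_def by blast

lemma cyc_deg: "is_cycle E ends C \<Longrightarrow> deg C v = 0 \<or> deg C v = 2"
  unfolding is_cycle_def deg_def by blast

lemma cyc_sub: "is_cycle E ends C \<Longrightarrow> C \<subseteq> E" unfolding is_cycle_def by blast
lemma cyc_ne: "is_cycle E ends C \<Longrightarrow> C \<noteq> {}" unfolding is_cycle_def by blast

lemma CF:
  assumes "D \<subseteq> E" "D \<noteq> {}" "leafless D"
  shows "\<exists>C \<subseteq> D. is_cycle E ends C"
proof -
  let ?P = "\<lambda>D'. D' \<subseteq> D \<and> D' \<noteq> {} \<and> leafless D'"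
  have "?P D" using assms by blast
  then obtain D' where P: "?P D'" and min: "\<And>D''. ?P D'' \<Longrightarrow> card D' \<le> card D''"
    using ex_has_least_nat[of ?P D card] by blast
  have DE: "D' \<subseteq> E" using P assms(1) by blast
  have fD: "finite D'" using finX[OF DE] .
  obtain e where e: "e \<in> D'" using P by blast
  have ne: "D' - {e} \<noteq> {}"
  proof
    assume "D' - {e} = {}"
    then have D1: "D' = {e}" using e by blast
    have "card (ends e) = 2" using ends2 e DE by blast
    then obtain w where w: "w \<in> ends e" by (metis card.empty ex_in_conv zero_neq_numeral)
    have "{e'\<in>D'. w \<in> ends e'} = {e}" using D1 w by blast
    then have "deg D' w = 1" unfolding deg_def by simp
    then show False using P unfolding leafless_def by blast
  qed
  have noleaf: "\<forall>Z. Z \<subseteq> D' - {e} \<longrightarrow> Z \<noteq> {} \<longrightarrow> \<not> leafless Z"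
  proof (intro allI impI notI)
    fix Z assume Z: "Z \<subseteq> D' - {e}" "Z \<noteq> {}" "leafless Z"
    then have "?P Z" using P by blast
    then have "card D' \<le> card Z" by (rule min)
    moreover have "card Z \<le> card (D' - {e})" using Z(1) fD by (intro card_mono) auto
    moreover have "card (D' - {e}) < card D'" using card_Diff1_less[OF fD e] .
    ultimately show False by linarith
  qed
  have "card (D' - {e}) < card (Vs (D' - {e}))"
    using forest_count[of "D' - {e}"] DE ne noleaf by blast
  moreover have "card (Vs (D' - {e})) \<le> card (Vs D')"
    using fin_Vs[OF DE] unfolding Vs_def by (intro card_mono) auto
  moreover have "card (D' - {e}) = card D' - 1" using fD e by simp
  moreover have "card D' \<ge> 1" using fD e by (metis One_nat_def Suc_leI card_gt_0_iff empty_iff)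
  ultimately have cle: "card D' \<le> card (Vs D')" by linarith
  have dg: "\<And>v. deg D' v = 0 \<or> deg D' v = 2" using deg2[OF DE _ cle] P by blast
  have conn: "edge_connected_set ends D'"
    unfolding edge_connected_set_def
  proof (intro allI impI)
    fix D1 assume D1: "D1 \<subseteq> D' \<and> D1 \<noteq> {} \<and> D1 \<noteq> D'"
    show "\<exists>e\<in>D1. \<exists>e'\<in>D' - D1. ends e \<inter> ends e' \<noteq> {}"
    proof (rule ccontr)
      assume nc: "\<not> (\<exists>e\<in>D1. \<exists>e'\<in>D' - D1. ends e \<inter> ends e' \<noteq> {})"
      have "leafless D1" unfolding leafless_def
      proof
        fix v
        show "deg D1 v \<noteq> 1"
        proof (cases "\<exists>e\<in>D1. v \<in> ends e")
          case True
          then have "{e'\<in>D1. v \<in> ends e'} = {e'\<in>D'. v \<in> ends e'}" using nc D1 by blast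
          then have "deg D1 v = deg D' v" unfolding deg_def by simp
          then show ?thesis using P unfolding leafless_def by simp
        next
          case False
          then have "{e'\<in>D1. v \<in> ends e'} = {}" by blast
          then show ?thesis unfolding deg_def by (metis card.empty zero_neq_one)
        qed
      qed
      then have "?P D1" using D1 P by blast
      then have "card D' \<le> card D1" by (rule min)
      moreover have "card D1 < card D'" using D1 fD by (intro psubset_card_mono) auto
      ultimately show False by linarith
    qed
  qed
  have "is_cycle E ends D'" unfolding is_cycle_def
    using DE P conn dg unfolding deg_def by blast
  then show ?thesis using P by blast
qed

lemma U:
  assumes Z: "Z \<subseteq> E" "Z \<noteq> {}" "leafless Z"
  shows "is_cycle E ends Z"
proof -
  obtain C where C: "C \<subseteq> Z" "is_cycle E ends C" using CF[OF Z] by blast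
  show ?thesis
  proof (cases "Z = C")
    case True then show ?thesis using C by simp
  next
    case False
    have fZ: "finite Z" using finX[OF Z(1)] .
    obtain e0 where e0: "e0 \<in> C" using cyc_ne[OF C(2)] by blast
    have ne: "Z - {e0} \<noteq> {}" using False C(1) e0 by blast
    have noleaf: "\<forall>W. W \<subseteq> Z - {e0} \<longrightarrow> W \<noteq> {} \<longrightarrow> \<not> leafless W"
    proof (intro allI impI notI)
      fix W assume W: "W \<subseteq> Z - {e0}" "W \<noteq> {}" "leafless W"
      then obtain C' where C': "C' \<subseteq> W" "is_cycle E ends C'" using CF[of W] Z(1) by blast
      then have "C' = C" using uniq C(2) by blast
      then show False using C' W e0 by blast
    qed
    have "card (Z - {e0}) < card (Vs (Z - {e0}))"
      using forest_count[of "Z - {e0}"] Z ne noleaf by blast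
    moreover have "card (Vs (Z - {e0})) \<le> card (Vs Z)"
      using fin_Vs[OF Z(1)] unfolding Vs_def by (intro card_mono) auto
    moreover have "card (Z - {e0}) = card Z - 1" using fZ e0 C(1) by auto
    moreover have "card Z \<ge> 1" using fZ Z(2) by (metis One_nat_def Suc_leI card_gt_0_iff)
    ultimately have cle: "card Z \<le> card (Vs Z)" by linarith
    have dZ: "\<And>v. deg Z v = 0 \<or> deg Z v = 2" using deg2[OF Z(1) Z(3) cle] .
    have CE: "C \<subseteq> E" using cyc_sub[OF C(2)] .
    have "leafless (Z - C)" unfolding leafless_def
    proof
      fix v
      have "{e\<in>Z - C. v \<in> ends e} = {e\<in>Z. v \<in> ends e} - {e\<in>C. v \<in> ends e}" by blast
      moreover have "{e\<in>C. v \<in> ends e} \<subseteq> {e\<in>Z. v \<in> ends e}" using C(1) by blast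
      ultimately have "deg (Z - C) v = deg Z v - deg C v"
        unfolding deg_def using finX[OF CE] by (simp add: card_Diff_subset)
      moreover have "deg C v \<le> deg Z v" using deg_le[OF Z(1) C(1)] .
      ultimately show "deg (Z - C) v \<noteq> 1" using dZ[of v] cyc_deg[OF C(2), of v] by auto
    qed
    moreover have "Z - C \<noteq> {}" using False C(1) by blast
    ultimately obtain C'' where C'': "C'' \<subseteq> Z - C" "is_cycle E ends C''"
      using CF[of "Z - C"] Z(1) by blast
    then have "C'' = C" using uniq C(2) by blast
    then show ?thesis using C'' cyc_ne[OF C(2)] by blast
  qed
qed

definition proper :: "('e \<Rightarrow> nat) \<Rightarrow> nat \<Rightarrow> 'e set \<Rightarrow> bool" where
  "proper c k X \<longleftrightarrow> (\<forall>e\<in>X. c e < k) \<and>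
     (\<forall>e\<in>X. \<forall>e'\<in>X. e \<noteq> e' \<and> ends e \<inter> ends e' \<noteq> {} \<longrightarrow> c e \<noteq> c e')"

lemma colorable_iff: "edge_colorable ends k X \<longleftrightarrow> (\<exists>c. proper c k X)"
  unfolding edge_colorable_def proper_def by blast

lemma proper_mono: "proper c k X \<Longrightarrow> Y \<subseteq> X \<Longrightarrow> k \<le> k' \<Longrightarrow> proper c k' Y"
  unfolding proper_def by (meson less_le_trans subsetD)

lemma other_end:
  assumes "e \<in> E" "w \<in> ends e"
  obtains z where "ends e = {w, z}" "z \<noteq> w"
proof -
  have "card (ends e - {w}) = 1" using ends2[OF assms(1)] assms(2) fin_ends[OF assms(1)] by simp
  then obtain z where "ends e - {w} = {z}" by (auto simp: card_1_singleton_iff)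
  then have "ends e = {w, z}" "z \<noteq> w" using assms(2) by blast+
  then show ?thesis using that by blast
qed

lemma EXT:
  assumes "X \<subseteq> E" "Y \<subseteq> X" "\<forall>v. deg X v \<le> k" "proper c k Y"
    "\<forall>Z. Y \<subset> Z \<and> Z \<subseteq> X \<longrightarrow> (\<exists>e\<in>Z-Y. \<exists>w\<in>ends e. deg Z w = 1)"
  shows "edge_colorable ends k X"
  using assms
proof (induction "card (X - Y)" arbitrary: X rule: less_induct)
  case less
  show ?case
  proof (cases "X = Y")
    case True
    then show ?thesis using less.prems(4) colorable_iff by blast
  next
    case False
    then have "Y \<subset> X" using less.prems(2) by blast
    then obtain e w where ew: "e \<in> X - Y" "w \<in> ends e" "deg X w = 1" using less.prems(5) by blast
    obtain e1 where e1: "e1 \<in> X" "w \<in> ends e1" "\<And>e'. e' \<in> X \<Longrightarrow> w \<in> ends e' \<Longrightarrow> e' = e1"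
      using deg1E[OF less.prems(1) ew(3)] by blast
    have ee1: "e1 = e" using e1(3) ew by blast
    have eE: "e \<in> E" using ew(1) less.prems(1) by blast
    obtain z where z: "ends e = {w, z}" "z \<noteq> w" using other_end[OF eE ew(2)] by blast
    let ?X' = "X - {e}"
    have fX: "finite X" using finX[OF less.prems(1)] .
    have "edge_colorable ends k ?X'"
    proof (rule less.hyps)
      have "?X' - Y = (X - Y) - {e}" by blast
      moreover have "card ((X - Y) - {e}) < card (X - Y)"
        using ew(1) fX by (intro card_Diff1_less) auto
      ultimately show "card (?X' - Y) < card (X - Y)" by simp
      show "?X' \<subseteq> E" using less.prems(1) by blast
      show "Y \<subseteq> ?X'" using less.prems(2) ew(1) by blast
      show "\<forall>v. deg ?X' v \<le> k" using less.prems(3) deg_le[OF less.prems(1), of ?X'] le_trans by blast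
      show "proper c k Y" by fact
      show "\<forall>Z. Y \<subset> Z \<and> Z \<subseteq> ?X' \<longrightarrow> (\<exists>e\<in>Z-Y. \<exists>w\<in>ends e. deg Z w = 1)"
        using less.prems(5) by blast
    qed
    then obtain c' where c': "proper c' k ?X'" using colorable_iff by blast
    let ?N = "{e'\<in>?X'. z \<in> ends e'}"
    have fN: "finite ?N" using fX by simp
    have "{e'\<in>X. z \<in> ends e'} = insert e ?N" using ew(1) z by blast
    then have "deg X z = card ?N + 1" unfolding deg_def using fN by simp
    then have cN: "card ?N + 1 \<le> k" using less.prems(3) by metis
    have "card (c' ` ?N) \<le> card ?N" using fN card_image_le by blast
    then have "card (c' ` ?N) < card {0..<k}" using cN by simp
    then have "\<not> {0..<k} \<subseteq> c' ` ?N" using fN by (meson card_mono finite_imageI not_le)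
    then obtain col where col: "col \<in> {0..<k}" "col \<notin> c' ` ?N" by blast
    then have col1: "col < k" by simp
    let ?c = "c'(e := col)"
    have "proper ?c k X" unfolding proper_def
    proof (intro conjI ballI impI)
      fix x assume "x \<in> X"
      then show "?c x < k" using c' col1 unfolding proper_def by auto
    next
      fix x y assume xy: "x \<in> X" "y \<in> X" "x \<noteq> y \<and> ends x \<inter> ends y \<noteq> {}"
      show "?c x \<noteq> ?c y"
      proof (cases "x = e \<or> y = e")
        case False
        then show ?thesis using c' xy unfolding proper_def by auto
      next
        case True
        have key: "\<And>u. u \<in> X \<Longrightarrow> u \<noteq> e \<Longrightarrow> ends e \<inter> ends u \<noteq> {} \<Longrightarrow> c' u \<noteq> col"
        proof -
          fix u assume u: "u \<in> X" "u \<noteq> e" "ends e \<inter> ends u \<noteq> {}"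
          have "w \<notin> ends u" using e1(3) ee1 u by blast
          then have "z \<in> ends u" using u(3) z(1) by auto
          then have "u \<in> ?N" using u by blast
          then show "c' u \<noteq> col" using col(2) by blast
        qed
        show ?thesis
        proof (cases "x = e")
          case True
          then have "y \<noteq> e" using xy by blast
          then show ?thesis using key[of y] xy True by auto
        next
          case False
          then have "y = e" using \<open>x = e \<or> y = e\<close> by blast
          then show ?thesis using key[of x] xy False by (auto simp: Int_commute)
        qed
      qed
    qed
    then show ?thesis using colorable_iff by blast
  qed
qed

lemma col_deg:
  assumes "X \<subseteq> E" "proper c k X" shows "deg X v \<le> k"
proof -
  let ?N = "{e\<in>X. v \<in> ends e}"
  have "inj_on c ?N" using assms(2) unfolding proper_def inj_on_def by blast
  moreover have "c ` ?N \<subseteq> {0..<k}" using assms(2) unfolding proper_def by auto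
  ultimately have "card ?N \<le> card {0..<k}" by (intro card_inj_on_le) auto
  then show ?thesis unfolding deg_def by simp
qed

lemma deg_un:
  assumes "A \<subseteq> E" "B \<subseteq> E" "A \<inter> B = {}"
  shows "deg (A \<union> B) v = deg A v + deg B v"
proof -
  have "{e\<in>A \<union> B. v \<in> ends e} = {e\<in>A. v \<in> ends e} \<union> {e\<in>B. v \<in> ends e}" by blast
  moreover have "finite {e\<in>A. v \<in> ends e}" "finite {e\<in>B. v \<in> ends e}" using finX assms by auto
  moreover have "{e\<in>A. v \<in> ends e} \<inter> {e\<in>B. v \<in> ends e} = {}" using assms(3) by blast
  ultimately show ?thesis unfolding deg_def by (simp add: card_Un_disjoint)
qed

lemma deg_empty: "deg {} v = 0" unfolding deg_def by simp

lemma deg_single: "deg {e} v = (if v \<in> ends e then 1 else 0)"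
proof -
  have "{e'\<in>{e}. v \<in> ends e'} = (if v \<in> ends e then {e} else {})" by auto
  then show ?thesis unfolding deg_def by simp
qed

lemma acyc_mono: "acyc X \<Longrightarrow> Y \<subseteq> X \<Longrightarrow> acyc Y" unfolding acyc_def by blast

lemma leaf_of_acyc:
  assumes "Z \<subseteq> E" "Z \<noteq> {}" "acyc Z"
  obtains w where "deg Z w = 1"
proof -
  have "\<not> leafless Z"
  proof
    assume "leafless Z"
    then have "is_cycle E ends Z" using U assms by blast
    then show False using assms(3) unfolding acyc_def by blast
  qed
  then show ?thesis using that unfolding leafless_def by blast
qed

lemma COL0:
  assumes "X \<subseteq> E" "acyc X" "\<forall>v. deg X v \<le> k"
  shows "edge_colorable ends k X"
proof (rule EXT[OF assms(1) _ assms(3)])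
  show "{} \<subseteq> X" by simp
  show "proper (\<lambda>_. 0) k {}" unfolding proper_def by simp
  show "\<forall>Z. {} \<subset> Z \<and> Z \<subseteq> X \<longrightarrow> (\<exists>e\<in>Z-{}. \<exists>w\<in>ends e. deg Z w = 1)"
  proof (intro allI impI)
    fix Z assume Z: "{} \<subset> Z \<and> Z \<subseteq> X"
    then have ZE: "Z \<subseteq> E" and ne: "Z \<noteq> {}" and ac: "acyc Z"
      using assms acyc_mono by blast+
    obtain w where w: "deg Z w = 1" using leaf_of_acyc[OF ZE ne ac] by blast
    obtain e where "e \<in> Z" "w \<in> ends e" using deg1E[OF ZE w] by blast
    then show "\<exists>e\<in>Z-{}. \<exists>w\<in>ends e. deg Z w = 1" using w by blast
  qed
qed

lemma COLC:
  assumes "X \<subseteq> E" "C \<subseteq> X" "is_cycle E ends C" "proper c k C" "\<forall>v. deg X v \<le> k"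
  shows "edge_colorable ends k X"
proof (rule EXT[OF assms(1) assms(2) assms(5) assms(4)])
  show "\<forall>Z. C \<subset> Z \<and> Z \<subseteq> X \<longrightarrow> (\<exists>e\<in>Z-C. \<exists>w\<in>ends e. deg Z w = 1)"
  proof (intro allI impI)
    fix Z assume Z: "C \<subset> Z \<and> Z \<subseteq> X"
    then have ZE: "Z \<subseteq> E" using assms(1) by blast
    have "\<not> leafless Z"
    proof
      assume "leafless Z"
      then have "is_cycle E ends Z" using U[OF ZE] Z by blast
      then have "Z = C" using uniq assms(3) by blast
      then show False using Z by blast
    qed
    then obtain w where w: "deg Z w = 1" unfolding leafless_def by blast
    obtain e where e: "e \<in> Z" "w \<in> ends e" using deg1E[OF ZE w] by blast
    have "e \<notin> C"
    proof
      assume "e \<in> C"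
      then have "w \<in> Vs C" unfolding Vs_def using e by blast
      then have "deg C w \<ge> 1" using deg_pos cyc_sub[OF assms(3)] by blast
      then have "deg C w = 2" using cyc_deg[OF assms(3), of w] by simp
      moreover have "deg C w \<le> deg Z w" using deg_le[OF ZE] Z by blast
      ultimately show False using w by simp
    qed
    then show "\<exists>e\<in>Z-C. \<exists>w\<in>ends e. deg Z w = 1" using e w by blast
  qed
qed

lemma split:
  assumes "T \<subseteq> E" "acyc T"
  shows "\<exists>A \<subseteq> T. \<forall>v. 2 * deg A v \<le> deg T v + 1 \<and> 2 * deg (T - A) v \<le> deg T v + 1"
  using assms
proof (induction "card T" arbitrary: T rule: less_induct)
  case less
  show ?case
  proof (cases "T = {}")
    case True
    then show ?thesis by (auto simp: deg_empty)
  next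
    case False
    obtain w where w: "deg T w = 1" using leaf_of_acyc[OF less.prems(1) False less.prems(2)] by blast
    obtain e where e: "e \<in> T" "w \<in> ends e" "\<And>e'. e' \<in> T \<Longrightarrow> w \<in> ends e' \<Longrightarrow> e' = e"
      using deg1E[OF less.prems(1) w] by blast
    have eE: "e \<in> E" using e(1) less.prems(1) by blast
    obtain z where z: "ends e = {w, z}" "z \<noteq> w" using other_end[OF eE e(2)] by blast
    let ?T' = "T - {e}"
    have fT: "finite T" using finX[OF less.prems(1)] .
    have T'E: "?T' \<subseteq> E" using less.prems(1) by blast
    have "\<exists>A \<subseteq> ?T'. \<forall>v. 2 * deg A v \<le> deg ?T' v + 1 \<and> 2 * deg (?T' - A) v \<le> deg ?T' v + 1"
    proof (rule less.hyps)
      show "card ?T' < card T" using card_Diff1_less[OF fT e(1)] .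
      show "?T' \<subseteq> E" by fact
      show "acyc ?T'" using acyc_mono less.prems(2) by blast
    qed
    then obtain A' where A': "A' \<subseteq> ?T'"
      "\<And>v. 2 * deg A' v \<le> deg ?T' v + 1" "\<And>v. 2 * deg (?T' - A') v \<le> deg ?T' v + 1" by blast
    have A'E: "A' \<subseteq> E" using A'(1) T'E by blast
    have B'E: "?T' - A' \<subseteq> E" using T'E by blast
    have dT: "\<And>v. deg T v = deg ?T' v + deg {e} v"
    proof -
      fix v have "T = ?T' \<union> {e}" using e(1) by blast
      then show "deg T v = deg ?T' v + deg {e} v" using deg_un[OF T'E, of "{e}"] eE by simp
    qed
    have dsplit: "\<And>v. deg ?T' v = deg A' v + deg (?T' - A') v"
    proof -
      fix v have "?T' = A' \<union> (?T' - A')" using A'(1) by blast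
      then show "deg ?T' v = deg A' v + deg (?T' - A') v" using deg_un[OF A'E B'E] by (metis Diff_disjoint)
    qed
    have w0: "deg ?T' w = 0"
    proof -
      have "{e'\<in>?T'. w \<in> ends e'} = {}" using e(3) by blast
      then show ?thesis unfolding deg_def by (metis card.empty)
    qed
    have eA': "e \<notin> A'" using A'(1) by blast
    show ?thesis
    proof (cases "deg A' z \<le> deg (?T' - A') z")
      case True
      let ?A = "insert e A'"
      have AT: "?A \<subseteq> T" using A'(1) e(1) by blast
      have dA: "\<And>v. deg ?A v = deg A' v + deg {e} v"
      proof -
        fix v have "?A = A' \<union> {e}" by blast
        then show "deg ?A v = deg A' v + deg {e} v" using deg_un[OF A'E, of "{e}"] eE eA' by simp
      qed
      have dB: "T - ?A = ?T' - A'" by blast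
      have "\<forall>v. 2 * deg ?A v \<le> deg T v + 1 \<and> 2 * deg (T - ?A) v \<le> deg T v + 1"
      proof
        fix v
        show "2 * deg ?A v \<le> deg T v + 1 \<and> 2 * deg (T - ?A) v \<le> deg T v + 1"
        proof (cases "v \<in> ends e")
          case False
          then show ?thesis using dA dT dB A'(2,3)[of v] by (simp add: deg_single)
        next
          case True
          then have "v = w \<or> v = z" using z by blast
          then show ?thesis
          proof
            assume "v = w"
            then show ?thesis using dA dT dB w0 dsplit[of v] True by (simp add: deg_single)
          next
            assume "v = z"
            then show ?thesis using dA dT dB dsplit[of v] True A'(2,3)[of v] \<open>deg A' z \<le> deg (?T' - A') z\<close>
              by (simp add: deg_single)
          qed
        qed
      qed
      then show ?thesis using AT by blast
    next
      case False
      have AT: "A' \<subseteq> T" using A'(1) by blast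
      have dB: "T - A' = (?T' - A') \<union> {e}" using e(1) eA' by blast
      have dBd: "\<And>v. deg (T - A') v = deg (?T' - A') v + deg {e} v"
        using dB deg_un[OF B'E, of "{e}"] eE by simp
      have "\<forall>v. 2 * deg A' v \<le> deg T v + 1 \<and> 2 * deg (T - A') v \<le> deg T v + 1"
      proof
        fix v
        show "2 * deg A' v \<le> deg T v + 1 \<and> 2 * deg (T - A') v \<le> deg T v + 1"
        proof (cases "v \<in> ends e")
          case False
          then show ?thesis using dBd dT A'(2,3)[of v] by (simp add: deg_single)
        next
          case True
          then have "v = w \<or> v = z" using z by blast
          then show ?thesis
          proof
            assume "v = w"
            then show ?thesis using dBd dT w0 dsplit[of v] True by (simp add: deg_single)
          next
            assume "v = z"
            then show ?thesis using dBd dT dsplit[of v] True A'(2,3)[of v] \<open>\<not> deg A' z \<le> deg (?T' - A') z\<close>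
              by (simp add: deg_single)
          qed
        qed
      qed
      then show ?thesis using AT by blast
    qed
  qed
qed

lemma nu_fin: "finite {card F | F. F \<subseteq> E \<and> edge_colorable ends k F}"
proof -
  have "{card F | F. F \<subseteq> E \<and> edge_colorable ends k F} \<subseteq> card ` Pow E" by blast
  then show ?thesis using finE finite_subset by blast
qed

lemma nu_ge: "S \<subseteq> E \<Longrightarrow> edge_colorable ends k S \<Longrightarrow> card S \<le> nu E ends k"
  unfolding nu_def using nu_fin by (intro Max_ge) auto

lemma nu_obtain: obtains F where "F \<subseteq> E" "edge_colorable ends k F" "card F = nu E ends k"
proof -
  have "edge_colorable ends k {}" unfolding edge_colorable_def by simp
  then have "{card F | F. F \<subseteq> E \<and> edge_colorable ends k F} \<noteq> {}" by blast
  then have "nu E ends k \<in> {card F | F. F \<subseteq> E \<and> edge_colorable ends k F}"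
    unfolding nu_def using nu_fin by (intro Max_in) auto
  then show ?thesis using that by auto
qed

lemma main:
  assumes "k \<ge> 2"
  shows "(nu E ends (k - 1) + nu E ends (k + 1)) div 2 \<le> nu E ends k"
proof -
  obtain F where F: "F \<subseteq> E" "edge_colorable ends (k-1) F" "card F = nu E ends (k-1)"
    using nu_obtain by blast
  obtain H where H: "H \<subseteq> E" "edge_colorable ends (k+1) H" "card H = nu E ends (k+1)"
    using nu_obtain by blast
  obtain cF where cF: "proper cF (k-1) F" using F(2) colorable_iff by blast
  obtain cH where cH: "proper cH (k+1) H" using H(2) colorable_iff by blast
  have dF: "\<And>v. deg F v \<le> k - 1" using col_deg[OF F(1) cF] .
  have dH: "\<And>v. deg H v \<le> k + 1" using col_deg[OF H(1) cH] .
  define I where "I = F \<inter> H"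
  define T where "T = (F - H) \<union> (H - F)"
  have IE: "I \<subseteq> E" using F(1) unfolding I_def by blast
  have TE: "T \<subseteq> E" using F(1) H(1) unfolding T_def by blast
  have IT: "I \<inter> T = {}" unfolding I_def T_def by blast
  have fF: "finite F" "finite H" using finX F(1) H(1) by auto
  have degs: "\<And>v. deg F v + deg H v = 2 * deg I v + deg T v"
  proof -
    fix v
    have "F = I \<union> (F - H)" "H = I \<union> (H - F)" unfolding I_def by blast+
    then have "deg F v = deg I v + deg (F - H) v" "deg H v = deg I v + deg (H - F) v"
      using deg_un[OF IE, of "F - H" v] deg_un[OF IE, of "H - F" v] F(1) H(1) unfolding I_def by auto
    moreover have "deg T v = deg (F - H) v + deg (H - F) v"
      unfolding T_def using deg_un[of "F - H" "H - F" v] F(1) H(1) by auto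
    ultimately show "deg F v + deg H v = 2 * deg I v + deg T v" by simp
  qed
  have dIT: "\<And>v. deg T v + 2 * deg I v \<le> 2 * k"
  proof -
    fix v
    have "k - 1 + (k + 1) = 2 * k" using assms by simp
    then show "deg T v + 2 * deg I v \<le> 2 * k" using degs[of v] dF[of v] dH[of v] by linarith
  qed
  have cards: "card F + card H = 2 * card I + card T"
  proof -
    have "card F = card I + card (F - H)" unfolding I_def using card_Int_Diff[OF fF(1)] .
    moreover have "card H = card I + card (H - F)" unfolding I_def using card_Int_Diff[OF fF(2), of F]
      by (simp add: Int_commute)
    moreover have "card T = card (F - H) + card (H - F)" unfolding T_def using fF
      by (intro card_Un_disjoint) auto
    ultimately show ?thesis by simp
  qed
  have fT: "finite T" using finX[OF TE] .
  obtain T' where T': "T' \<subseteq> T" "acyc T'" "card T \<le> card T' + 1"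
    "card T' \<noteq> card T \<Longrightarrow> (\<forall>P \<subseteq> T'. acyc (I \<union> P))"
  proof (cases "acyc T")
    case True
    then show ?thesis using that[of T] by simp
  next
    case False
    then obtain C where C: "is_cycle E ends C" "C \<subseteq> T" unfolding acyc_def by blast
    obtain e0 where e0: "e0 \<in> C" using cyc_ne[OF C(1)] by blast
    have a1: "acyc (T - {e0})" unfolding acyc_def
    proof (intro allI impI notI)
      fix C' assume "is_cycle E ends C'" "C' \<subseteq> T - {e0}"
      then show False using uniq[OF C(1)] e0 by blast
    qed
    have a2: "\<forall>P \<subseteq> T - {e0}. acyc (I \<union> P)" unfolding acyc_def
    proof (intro allI impI notI)
      fix P C' assume "P \<subseteq> T - {e0}" "is_cycle E ends C'" "C' \<subseteq> I \<union> P"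
      then show False using uniq[OF C(1)] e0 C(2) IT by blast
    qed
    have "e0 \<in> T" using e0 C(2) by blast
    then have "card (T - {e0}) = card T - 1" using fT by simp
    then show ?thesis using that[of "T - {e0}"] a1 a2 by auto
  qed
  have T'E: "T' \<subseteq> E" using T'(1) TE by blast
  obtain A where A: "A \<subseteq> T'" "\<And>v. 2 * deg A v \<le> deg T' v + 1" "\<And>v. 2 * deg (T' - A) v \<le> deg T' v + 1"
    using split[OF T'E T'(2)] by blast
  obtain P Q where PQ: "(P = A \<and> Q = T' - A) \<or> (P = T' - A \<and> Q = A)" "card Q \<le> card P"
    by (metis le_cases)
  have PT: "P \<subseteq> T'" "Q \<subseteq> T'" "P \<inter> Q = {}" using PQ(1) A(1) by auto
  have fT': "finite T'" using finX[OF T'E] .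
  have cA: "card (T' - A) = card T' - card A" using card_Diff_subset[OF finite_subset[OF A(1) fT'] A(1)] .
  have cA2: "card A \<le> card T'" using card_mono[OF fT' A(1)] .
  have cPQ: "card P + card Q = card T'"
    using PQ(1) cA cA2 by auto
  have dPQ: "\<And>v. 2 * deg P v \<le> deg T' v + 1" "\<And>v. 2 * deg Q v \<le> deg T' v + 1"
    using PQ(1) A(2,3) by auto
  have dT'T: "\<And>v. deg T' v \<le> deg T v" using deg_le[OF TE T'(1)] .
  have PE: "P \<subseteq> E" "Q \<subseteq> E" using PT T'E by auto
  have IP: "I \<inter> P = {}" "I \<inter> Q = {}" using PT T'(1) IT by auto
  have degS: "\<And>R v. R \<subseteq> E \<Longrightarrow> I \<inter> R = {} \<Longrightarrow> 2 * deg R v \<le> deg T' v + 1 \<Longrightarrow> deg (I \<union> R) v \<le> k"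
  proof -
    fix R v assume R: "R \<subseteq> E" "I \<inter> R = {}" "2 * deg R v \<le> deg T' v + 1"
    have "deg (I \<union> R) v = deg I v + deg R v" using deg_un[OF IE R(1) R(2)] .
    moreover have "deg T' v + 2 * deg I v \<le> 2 * k" using dT'T[of v] dIT[of v] by linarith
    ultimately show "deg (I \<union> R) v \<le> k" using R(3) by presburger
  qed
  have dSP: "\<forall>v. deg (I \<union> P) v \<le> k" using degS[OF PE(1) IP(1) dPQ(1)] by blast
  have dSQ: "\<forall>v. deg (I \<union> Q) v \<le> k" using degS[OF PE(2) IP(2) dPQ(2)] by blast
  have fI: "finite I" using finX[OF IE] .
  have cSP: "card (I \<union> P) = card I + card P" using fI PE(1) IP(1) finX by (simp add: card_Un_disjoint)
  have cSQ: "card (I \<union> Q) = card I + card Q" using fI PE(2) IP(2) finX by (simp add: card_Un_disjoint)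
  have N: "(nu E ends (k - 1) + nu E ends (k + 1)) div 2 = card I + card T div 2"
    using cards F(3) H(3) by simp
  have cP: "card T div 2 \<le> card P" using cPQ PQ(2) T'(3) by linarith
  have SPE: "I \<union> P \<subseteq> E" "I \<union> Q \<subseteq> E" using IE PE by auto
  have wit: "\<And>S. S \<subseteq> E \<Longrightarrow> edge_colorable ends k S \<Longrightarrow> card I + card T div 2 \<le> card S \<Longrightarrow>
     \<exists>S. S \<subseteq> E \<and> edge_colorable ends k S \<and> card I + card T div 2 \<le> card S" by blast
  have "\<exists>S. S \<subseteq> E \<and> edge_colorable ends k S \<and> card I + card T div 2 \<le> card S"
  proof (cases "acyc (I \<union> P)")
    case True
    show ?thesis using wit[OF SPE(1) COL0[OF SPE(1) True dSP]] cSP cP by simp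
  next
    case False
    then obtain C where C: "is_cycle E ends C" "C \<subseteq> I \<union> P" unfolding acyc_def by blast
    have eqT: "card T' = card T" using T'(4) PT(1) False by blast
    show ?thesis
    proof (cases "C \<subseteq> I")
      case True
      have "proper cF k C" using proper_mono[OF cF] True unfolding I_def by auto
      then show ?thesis using wit[OF SPE(1) COLC[OF SPE(1) C(2) C(1) _ dSP]] cSP cP by simp
    next
      case False
      then obtain e1 where e1: "e1 \<in> C" "e1 \<notin> I" by blast
      then have e1P: "e1 \<in> P" using C(2) by blast
      have aQ: "acyc (I \<union> Q)" unfolding acyc_def
      proof (intro allI impI notI)
        fix C' assume "is_cycle E ends C'" "C' \<subseteq> I \<union> Q"
        then show False using uniq[OF C(1)] e1 e1P PT(3) by blast
      qed
      show ?thesis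
      proof (cases "card T div 2 \<le> card Q")
        case True
        then show ?thesis using wit[OF SPE(2) COL0[OF SPE(2) aQ dSQ]] cSQ by simp
      next
        case False
        let ?S = "(I \<union> P) - {e1}"
        have SE: "?S \<subseteq> E" using SPE by blast
        have aS: "acyc ?S" unfolding acyc_def
        proof (intro allI impI notI)
          fix C' assume "is_cycle E ends C'" "C' \<subseteq> ?S"
          then show False using uniq[OF C(1)] e1 by blast
        qed
        have dS: "\<forall>v. deg ?S v \<le> k" using dSP deg_le[OF SPE(1), of ?S] le_trans by blast
        have "card ?S = card I + card P - 1" using cSP e1P fI PE(1) finX by simp
        moreover have "card T div 2 + 1 \<le> card P" using False cPQ eqT by linarith
        ultimately show ?thesis using wit[OF SE COL0[OF SE aS dS]] by simp
      qed
    qed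
  qed
  then obtain S where "S \<subseteq> E" "edge_colorable ends k S" "card I + card T div 2 \<le> card S" by blast
  then show ?thesis using N nu_ge by (metis le_trans)
qed

end

theorem theorem13:
  fixes V :: "'v set" and E :: "'e set" and ends :: "'e \<Rightarrow> 'v set" and k :: nat
  assumes "multigraph V E ends"
    and "at_most_one_cycle E ends"
    and "k \<ge> 2"
  shows "nu E ends k \<ge> (nu E ends (k - 1) + nu E ends (k + 1)) div 2"
proof -
  interpret mg V E ends using assms(1,2) by unfold_locales
  show ?thesis using main[OF assms(3)] .
qed

end
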